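(* Let $T \in \mathbb{R}^{n_1} \otimes \mathbb{R}^{n_2} \otimes \mathbb{R}^{n_3}$ and let $v \in \mathbb{R}^{n_1} \otimes \mathbb{R}^{n_2} \otimes \mathbb{R}^{n_3}$ be a rank-one tensor. Then $Q(T + v) \geq Q(T) - 1$.
   Context: A rank-one tensor is a nonzero tensor of the form $v_1 \otimes v_2 \otimes v_3$. For $r \geq 0$ let $I_r := \sum_{j=1}^r e_j \otimes e_j \otimes e_j$. The subrank of $T$ is $Q(T) := \max\{ r \mid \exists\ \mathbb{R}\text{-linear } \varphi_i : \mathbb{R}^{n_i} \to \mathbb{R}^r,\ (\varphi_1 \otimes \varphi_2 \otimes \varphi_3) T = I_r\}$. *)

theory Defs
  imports Complex_Main
begin

text \<open>A tensor in R^n1 (x) R^n2 (x) R^n3 is represented by its coordinate array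
  T :: nat => nat => nat => real, of which only the entries T i j k with
  i < n1, j < n2, k < n3 are relevant.  A linear map R^n -> R^r is represented by
  its r x n matrix A :: nat => nat => real (entries A a i with a < r, i < n).\<close>

type_synonym tensor3 = "nat \<Rightarrow> nat \<Rightarrow> nat \<Rightarrow> real"

definition tensor_add :: "tensor3 \<Rightarrow> tensor3 \<Rightarrow> tensor3" where
  "tensor_add T S = (\<lambda>i j k. T i j k + S i j k)"

definition apply_maps ::
  "nat \<Rightarrow> nat \<Rightarrow> nat \<Rightarrow> (nat \<Rightarrow> nat \<Rightarrow> real) \<Rightarrow> (nat \<Rightarrow> nat \<Rightarrow> real) \<Rightarrow> (nat \<Rightarrow> nat \<Rightarrow> real)
     \<Rightarrow> tensor3 \<Rightarrow> tensor3" where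
  "apply_maps n1 n2 n3 A B C T = (\<lambda>a b c.
     \<Sum>i<n1. \<Sum>j<n2. \<Sum>k<n3. A a i * B b j * C c k * T i j k)"

definition unit_tensor :: "tensor3" where
  "unit_tensor = (\<lambda>a b c. if a = b \<and> b = c then 1 else 0)"

definition restricts_to_unit :: "nat \<Rightarrow> nat \<Rightarrow> nat \<Rightarrow> tensor3 \<Rightarrow> nat \<Rightarrow> bool" where
  "restricts_to_unit n1 n2 n3 T r \<longleftrightarrow>
     (\<exists>A B C. \<forall>a<r. \<forall>b<r. \<forall>c<r. apply_maps n1 n2 n3 A B C T a b c = unit_tensor a b c)"

definition subrank :: "nat \<Rightarrow> nat \<Rightarrow> nat \<Rightarrow> tensor3 \<Rightarrow> nat" where
  "subrank n1 n2 n3 T = Max {r. restricts_to_unit n1 n2 n3 T r}"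

definition rank_one :: "nat \<Rightarrow> nat \<Rightarrow> nat \<Rightarrow> tensor3 \<Rightarrow> bool" where
  "rank_one n1 n2 n3 v \<longleftrightarrow>
     (\<exists>u1 u2 u3 :: nat \<Rightarrow> real.
        (\<forall>i<n1. \<forall>j<n2. \<forall>k<n3. v i j k = u1 i * u2 j * u3 k)) \<and>
     (\<exists>i<n1. \<exists>j<n2. \<exists>k<n3. v i j k \<noteq> 0)"

end

theory Submission imports Defs "Jordan_Normal_Form.Determinant" begin
lemma apply_lin:
  "apply_maps n1 n2 n3 (\<lambda>a i. A (f a) i - co a * A q i) (\<lambda>b j. B (g b) j) (\<lambda>c k. C (h c) k) S a b c
   = apply_maps n1 n2 n3 A B C S (f a) (g b) (h c) - co a * apply_maps n1 n2 n3 A B C S q (g b) (h c)"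
  by (simp add: apply_maps_def algebra_simps sum_subtractf sum_distrib_left)

lemma apply_add:
  "apply_maps n1 n2 n3 A B C (tensor_add T v) a b c = apply_maps n1 n2 n3 A B C T a b c + apply_maps n1 n2 n3 A B C v a b c"
  by (simp add: apply_maps_def tensor_add_def algebra_simps sum.distrib)

lemma apply_r1:
  assumes "\<forall>i<n1. \<forall>j<n2. \<forall>k<n3. v i j k = u1 i * u2 j * u3 k"
  shows "apply_maps n1 n2 n3 A B C v a b c = (\<Sum>i<n1. A a i * u1 i) * (\<Sum>j<n2. B b j * u2 j) * (\<Sum>k<n3. C c k * u3 k)"
proof -
  have "apply_maps n1 n2 n3 A B C v a b c = (\<Sum>i<n1. \<Sum>j<n2. \<Sum>k<n3. (A a i * u1 i) * (B b j * u2 j) * (C c k * u3 k))"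
    unfolding apply_maps_def using assms by (intro sum.cong refl) (simp add: ac_simps)
  also have "\<dots> = (\<Sum>i<n1. A a i * u1 i) * (\<Sum>j<n2. B b j * u2 j) * (\<Sum>k<n3. C c k * u3 k)"
    by (simp add: sum_distrib_left[symmetric] sum_distrib_right[symmetric])
  finally show ?thesis .
qed
lemma inner_dim:
  fixes P Q :: "nat \<Rightarrow> nat \<Rightarrow> real"
  assumes h: "\<forall>a<r. \<forall>b<r. (\<Sum>i<n. P a i * Q i b) = (if a = b then 1 else 0)"
  shows "r \<le> n"
proof (rule ccontr)
  assume "\<not> r \<le> n" hence nr: "n < r" by simp
  define P' where "P' = mat r r (\<lambda>(a,i). if i < n then P a i else 0)"
  define Q' where "Q' = mat r r (\<lambda>(i,b). if i < n then Q i b else 0)"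
  have PQ: "P' * Q' = 1\<^sub>m r"
  proof (rule eq_matI)
    fix a b assume a: "a < dim_row (1\<^sub>m r)" and b: "b < dim_col (1\<^sub>m r)"
    have "(P' * Q') $$ (a,b) = (\<Sum>i\<in>{0..<r}. (if i < n then P a i else 0) * (if i < n then Q i b else 0))"
      using a b by (simp add: P'_def Q'_def scalar_prod_def)
    also have "\<dots> = (\<Sum>i\<in>{0..<n}. P a i * Q i b)"
      using nr by (intro sum.mono_neutral_cong_right) auto
    also have "\<dots> = (if a = b then 1 else 0)" using h a b by (simp add: lessThan_atLeast0)
    finally show "(P' * Q') $$ (a,b) = 1\<^sub>m r $$ (a,b)" using a b by simp
  qed (auto simp: P'_def Q'_def)
  have Qc: "Q' \<in> carrier_mat r r" by (simp add: Q'_def)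
  have Pc: "P' \<in> carrier_mat r r" by (simp add: P'_def)
  have "multrow n 0 Q' = Q'"
    by (rule eq_matI) (auto simp: Q'_def)
  hence "det Q' = 0" using det_multrow[OF nr Qc, of 0] by simp
  hence "det (P' * Q') = 0" using det_mult[OF Pc Qc] by simp
  thus False using PQ by simp
qed

lemma restricts_bound:
  assumes "restricts_to_unit n1 n2 n3 T r"
  shows "r \<le> n1"
proof -
  obtain A B C where h: "\<forall>a<r. \<forall>b<r. \<forall>c<r. apply_maps n1 n2 n3 A B C T a b c = unit_tensor a b c"
    using assms unfolding restricts_to_unit_def by blast
  define Q where "Q = (\<lambda>i b. \<Sum>j<n2. \<Sum>k<n3. B b j * C b k * T i j k)"
  have "\<forall>a<r. \<forall>b<r. (\<Sum>i<n1. A a i * Q i b) = (if a = b then 1 else 0)"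
  proof (intro allI impI)
    fix a b assume a: "a < r" and b: "b < r"
    have "(\<Sum>i<n1. A a i * Q i b) = apply_maps n1 n2 n3 A B C T a b b"
      by (simp add: Q_def apply_maps_def sum_distrib_left mult.assoc)
    also have "\<dots> = (if a = b then 1 else 0)" using h a b by (simp add: unit_tensor_def)
    finally show "(\<Sum>i<n1. A a i * Q i b) = (if a = b then 1 else 0)" .
  qed
  thus ?thesis by (rule inner_dim)
qed

lemma subrank_facts:
  shows "finite {r. restricts_to_unit n1 n2 n3 T r}"
    and "restricts_to_unit n1 n2 n3 T (subrank n1 n2 n3 T)"
    and "restricts_to_unit n1 n2 n3 T r \<Longrightarrow> r \<le> subrank n1 n2 n3 T"
proof -
  show fin: "finite {r. restricts_to_unit n1 n2 n3 T r}"
    by (rule finite_subset[of _ "{..n1}"]) (auto dest: restricts_bound)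
  have ne: "restricts_to_unit n1 n2 n3 T 0" unfolding restricts_to_unit_def by simp
  show "restricts_to_unit n1 n2 n3 T (subrank n1 n2 n3 T)"
    unfolding subrank_def using Max_in[OF fin] ne by auto
  show "restricts_to_unit n1 n2 n3 T r \<Longrightarrow> r \<le> subrank n1 n2 n3 T"
    unfolding subrank_def using Max_ge[OF fin] by auto
qed

lemma step:
  assumes R: "restricts_to_unit n1 n2 n3 T (Suc m)"
    and V: "\<forall>i<n1. \<forall>j<n2. \<forall>k<n3. v i j k = u1 i * u2 j * u3 k"
  shows "restricts_to_unit n1 n2 n3 (tensor_add T v) m"
proof -
  let ?s = "Suc m"
  obtain A B C where h: "\<forall>a<?s. \<forall>b<?s. \<forall>c<?s. apply_maps n1 n2 n3 A B C T a b c = unit_tensor a b c"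
    using R unfolding restricts_to_unit_def by blast
  define x where "x = (\<lambda>a. \<Sum>i<n1. A a i * u1 i)"
  define y where "y = (\<lambda>b. \<Sum>j<n2. B b j * u2 j)"
  define z where "z = (\<lambda>c. \<Sum>k<n3. C c k * u3 k)"
  have W: "apply_maps n1 n2 n3 A B C (tensor_add T v) a b c = apply_maps n1 n2 n3 A B C T a b c + x a * y b * z c" for a b c
    unfolding apply_add apply_r1[OF V] x_def y_def z_def ..
  define p where "p = (if \<exists>q<?s. x q \<noteq> 0 then (SOME q. q < ?s \<and> x q \<noteq> 0) else 0)"
  have p: "p < ?s" and px: "x p = 0 \<Longrightarrow> \<forall>q<?s. x q = 0"
  proof -
    show "p < ?s"
    proof (cases "\<exists>q<?s. x q \<noteq> 0")
      case True
      then show ?thesis unfolding p_def using someI_ex[of "\<lambda>q. q < ?s \<and> x q \<noteq> 0"] by auto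
    next
      case False
      then show ?thesis unfolding p_def by auto
    qed
    show "x p = 0 \<Longrightarrow> \<forall>q<?s. x q = 0"
    proof (cases "\<exists>q<?s. x q \<noteq> 0")
      case True
      then have "x p \<noteq> 0" unfolding p_def using someI_ex[of "\<lambda>q. q < ?s \<and> x q \<noteq> 0"] by auto
      then show "x p = 0 \<Longrightarrow> \<forall>q<?s. x q = 0" by simp
    qed auto
  qed
  define \<sigma> where "\<sigma> = (\<lambda>a::nat. if a < p then a else Suc a)"
  have sig: "a < m \<Longrightarrow> \<sigma> a < ?s \<and> \<sigma> a \<noteq> p" for a using p by (auto simp: \<sigma>_def)
  have siginj: "(\<sigma> a = \<sigma> b) = (a = b)" for a b by (auto simp: \<sigma>_def)
  define co where "co = (\<lambda>a. if x p = 0 then 0 else x (\<sigma> a) / x p)"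
  have cox: "a < m \<Longrightarrow> x (\<sigma> a) - co a * x p = 0" for a
    using px sig by (auto simp: co_def)
  show ?thesis
    unfolding restricts_to_unit_def
  proof (intro exI allI impI)
    fix a b c assume a: "a < m" and b: "b < m" and c: "c < m"
    let ?S = "tensor_add T v"
    have "apply_maps n1 n2 n3 (\<lambda>a i. A (\<sigma> a) i - co a * A p i) (\<lambda>b j. B (\<sigma> b) j) (\<lambda>c k. C (\<sigma> c) k) ?S a b c
       = apply_maps n1 n2 n3 A B C ?S (\<sigma> a) (\<sigma> b) (\<sigma> c) - co a * apply_maps n1 n2 n3 A B C ?S p (\<sigma> b) (\<sigma> c)"
      by (rule apply_lin)
    also have "\<dots> = unit_tensor (\<sigma> a) (\<sigma> b) (\<sigma> c) + x (\<sigma> a) * y (\<sigma> b) * z (\<sigma> c)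
        - co a * (unit_tensor p (\<sigma> b) (\<sigma> c) + x p * y (\<sigma> b) * z (\<sigma> c))"
      unfolding W using h sig[OF a] sig[OF b] sig[OF c] p by simp
    also have "\<dots> = unit_tensor a b c + (x (\<sigma> a) - co a * x p) * y (\<sigma> b) * z (\<sigma> c)"
      using sig[OF b] by (simp add: unit_tensor_def siginj algebra_simps)
    also have "\<dots> = unit_tensor a b c" using cox[OF a] by simp
    finally show "apply_maps n1 n2 n3 (\<lambda>a i. A (\<sigma> a) i - co a * A p i) (\<lambda>b j. B (\<sigma> b) j) (\<lambda>c k. C (\<sigma> c) k) ?S a b c = unit_tensor a b c" .
  qed
qed

theorem lemma3p1:
  fixes n1 n2 n3 :: nat and T v :: tensor3
  assumes "rank_one n1 n2 n3 v"
  shows "int (subrank n1 n2 n3 (tensor_add T v)) \<ge> int (subrank n1 n2 n3 T) - 1"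
proof (cases "subrank n1 n2 n3 T")
  case 0
  then show ?thesis by simp
next
  case (Suc m)
  obtain u1 u2 u3 :: "nat \<Rightarrow> real" where V: "\<forall>i<n1. \<forall>j<n2. \<forall>k<n3. v i j k = u1 i * u2 j * u3 k"
    using assms unfolding rank_one_def by blast
  have "restricts_to_unit n1 n2 n3 T (Suc m)" using subrank_facts(2)[of n1 n2 n3 T] Suc by simp
  hence "restricts_to_unit n1 n2 n3 (tensor_add T v) m" using step V by blast
  hence "m \<le> subrank n1 n2 n3 (tensor_add T v)" by (rule subrank_facts(3))
  then show ?thesis using Suc by simp
qed

end
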